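(* Let $A$ be a vector space with bilinear operations $\cdot,\circ$, and $[x,y]=x\circ y-y\circ x$. (1) If $(A,\cdot,[-,-])$ is a transposed Poisson algebra, $(A,\circ)$ is pre-Lie, and $(-\mathcal{L}^*_{\cdot},\mathcal{L}^*_{\circ},A^* )$ is a representation of the transposed Poisson algebra $(A,\cdot,[-,-])$, then $(A,\cdot,\circ)$ is a TCPD algebra. (2) Conversely, if $(A,\cdot,\circ)$ is a TCPD algebra, then $(A,\cdot,[-,-])$ is a transposed Poisson algebra with representation $(-\mathcal{L}^*_{\cdot},\mathcal{L}^*_{\circ},A^* )$.
   Context: Finite-dimensional spaces, characteristic zero. $\mathcal{L}_\ast(x)y=x\ast y$; for linear $\rho:A\to\mathrm{End}(V)$, $\langle\rho^*(x)v^*,u\rangle=-\langle v^*,\rho(x)u\rangle$. Pre-Lie: $(x\circ y)\circ z-x\circ(y\circ z)=(y\circ x)\circ z-y\circ(x\circ z)$. Transposed Poisson algebra: $(A,\cdot)$ commutative associative, $(A,[-,-])$ Lie, $2z\cdot[x,y]=[z\cdot x,y]+[x,z\cdot y]$. A representation of a transposed Poisson algebra is $(\mu,\rho,V)$ with $\mu(x\cdot y)=\mu(x)\mu(y)$, $\rho([x,y])=[\rho(x),\rho(y)]$, $2\mu(x)\rho(y)=\rho(x\cdot y)+\rho(y)\mu(x)$, $2\mu([x,y])=\rho(x)\mu(y)-\rho(y)\mu(x)$. A TCPD algebra is $(A,\cdot,\circ)$ with $(A,\cdot)$ commutative associative, $(A,\circ)$ pre-Lie, and for all $x,y,z$: $2x\circ(y\cdot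 z)=(z\cdot x)\circ y+z\cdot(x\circ y)$; $2(x\circ y)\cdot z-2(y\circ x)\cdot z=x\cdot(y\circ z)-y\cdot(x\circ z)$; $3y\circ(z\cdot x)-3x\circ(z\cdot y)-(z\cdot x)\circ y+(z\cdot y)\circ x=0$. *)

theory Defs
  imports Main
begin

text \<open>A finite-dimensional vector space A over a field 'k of characteristic zero is
  modelled in coordinates with respect to a basis indexed by a finite type 'n:
  vectors are functions 'n => 'k. The dual space A^* is identified with the same
  coordinate space via the pairing  pair f u = sum_i f i * u i  (dual basis).\<close>

type_synonym ('n, 'k) vec = "'n \<Rightarrow> 'k"

definition vadd :: "('n, 'k::field) vec \<Rightarrow> ('n, 'k) vec \<Rightarrow> ('n, 'k) vec" where
  "vadd x y = (\<lambda>i. x i + y i)"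

definition vsub :: "('n, 'k::field) vec \<Rightarrow> ('n, 'k) vec \<Rightarrow> ('n, 'k) vec" where
  "vsub x y = (\<lambda>i. x i - y i)"

definition vsc :: "'k::field \<Rightarrow> ('n, 'k) vec \<Rightarrow> ('n, 'k) vec" where
  "vsc c x = (\<lambda>i. c * x i)"

definition vzero :: "('n, 'k::field) vec" where
  "vzero = (\<lambda>i. 0)"

definition pair :: "('n::finite, 'k::field) vec \<Rightarrow> ('n, 'k) vec \<Rightarrow> 'k" where
  "pair f u = (\<Sum>i\<in>UNIV. f i * u i)"

definition unitv :: "'n \<Rightarrow> ('n, 'k::field) vec" where
  "unitv j = (\<lambda>i. if i = j then 1 else 0)"

definition linear_map :: "(('n, 'k::field) vec \<Rightarrow> ('m, 'k) vec) \<Rightarrow> bool" where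
  "linear_map f \<longleftrightarrow> (\<forall>x y. f (vadd x y) = vadd (f x) (f y)) \<and> (\<forall>c x. f (vsc c x) = vsc c (f x))"

definition bilinear_op :: "(('n, 'k::field) vec \<Rightarrow> ('n, 'k) vec \<Rightarrow> ('n, 'k) vec) \<Rightarrow> bool" where
  "bilinear_op m \<longleftrightarrow> (\<forall>x. linear_map (m x)) \<and> (\<forall>y. linear_map (\<lambda>x. m x y))"

definition commutator :: "(('n, 'k::field) vec \<Rightarrow> ('n, 'k) vec \<Rightarrow> ('n, 'k) vec) \<Rightarrow> ('n, 'k) vec \<Rightarrow> ('n, 'k) vec \<Rightarrow> ('n, 'k) vec" where
  "commutator m x y = vsub (m x y) (m y x)"

text \<open>Left multiplication operator L_m(x) y = m x y, and its dual L_m^*(x) on A^*,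
  characterised by  pair (L^*(x) v) u = - pair v (m x u); the i-th coordinate of a
  functional is its value on the i-th basis vector.\<close>
definition dual_rep :: "(('n::finite, 'k::field) vec \<Rightarrow> ('n, 'k) vec \<Rightarrow> ('n, 'k) vec) \<Rightarrow> ('n, 'k) vec \<Rightarrow> ('n, 'k) vec \<Rightarrow> ('n, 'k) vec" where
  "dual_rep \<rho> x v = (\<lambda>i. - pair v (\<rho> x (unitv i)))"

definition neg_op :: "(('n, 'k::field) vec \<Rightarrow> ('m, 'k) vec \<Rightarrow> ('m, 'k) vec) \<Rightarrow> ('n, 'k) vec \<Rightarrow> ('m, 'k) vec \<Rightarrow> ('m, 'k) vec" where
  "neg_op \<mu> x v = (\<lambda>i. - \<mu> x v i)"

definition comm_assoc :: "(('n, 'k::field) vec \<Rightarrow> ('n, 'k) vec \<Rightarrow> ('n, 'k) vec) \<Rightarrow> bool" where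
  "comm_assoc d \<longleftrightarrow> (\<forall>x y. d x y = d y x) \<and> (\<forall>x y z. d (d x y) z = d x (d y z))"

definition lie_alg :: "(('n, 'k::field) vec \<Rightarrow> ('n, 'k) vec \<Rightarrow> ('n, 'k) vec) \<Rightarrow> bool" where
  "lie_alg b \<longleftrightarrow> (\<forall>x. b x x = vzero) \<and>
     (\<forall>x y z. vadd (vadd (b x (b y z)) (b y (b z x))) (b z (b x y)) = vzero)"

definition pre_lie :: "(('n, 'k::field) vec \<Rightarrow> ('n, 'k) vec \<Rightarrow> ('n, 'k) vec) \<Rightarrow> bool" where
  "pre_lie c \<longleftrightarrow> (\<forall>x y z. vsub (c (c x y) z) (c x (c y z)) = vsub (c (c y x) z) (c y (c x z)))"

definition transposed_poisson :: "(('n, 'k::field) vec \<Rightarrow> ('n, 'k) vec \<Rightarrow> ('n, 'k) vec) \<Rightarrow> (('n, 'k) vec \<Rightarrow> ('n, 'k) vec \<Rightarrow> ('n, 'k) vec) \<Rightarrow> bool" where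
  "transposed_poisson d b \<longleftrightarrow> comm_assoc d \<and> lie_alg b \<and>
     (\<forall>x y z. vsc 2 (d z (b x y)) = vadd (b (d z x) y) (b x (d z y)))"

definition tp_rep :: "(('n, 'k::field) vec \<Rightarrow> ('n, 'k) vec \<Rightarrow> ('n, 'k) vec) \<Rightarrow> (('n, 'k) vec \<Rightarrow> ('n, 'k) vec \<Rightarrow> ('n, 'k) vec)
     \<Rightarrow> (('n, 'k) vec \<Rightarrow> ('m, 'k) vec \<Rightarrow> ('m, 'k) vec) \<Rightarrow> (('n, 'k) vec \<Rightarrow> ('m, 'k) vec \<Rightarrow> ('m, 'k) vec) \<Rightarrow> bool" where
  "tp_rep d b \<mu> \<rho> \<longleftrightarrow>
     (\<forall>x. linear_map (\<mu> x)) \<and> (\<forall>x. linear_map (\<rho> x)) \<and>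
     (\<forall>x y. \<mu> (vadd x y) = (\<lambda>v. vadd (\<mu> x v) (\<mu> y v))) \<and> (\<forall>c x. \<mu> (vsc c x) = (\<lambda>v. vsc c (\<mu> x v))) \<and>
     (\<forall>x y. \<rho> (vadd x y) = (\<lambda>v. vadd (\<rho> x v) (\<rho> y v))) \<and> (\<forall>c x. \<rho> (vsc c x) = (\<lambda>v. vsc c (\<rho> x v))) \<and>
     (\<forall>x y v. \<mu> (d x y) v = \<mu> x (\<mu> y v)) \<and>
     (\<forall>x y v. \<rho> (b x y) v = vsub (\<rho> x (\<rho> y v)) (\<rho> y (\<rho> x v))) \<and>
     (\<forall>x y v. vsc 2 (\<mu> x (\<rho> y v)) = vadd (\<rho> (d x y) v) (\<rho> y (\<mu> x v))) \<and>
     (\<forall>x y v. vsc 2 (\<mu> (b x y) v) = vsub (\<rho> x (\<mu> y v)) (\<rho> y (\<mu> x v)))"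

definition tcpd :: "(('n, 'k::field) vec \<Rightarrow> ('n, 'k) vec \<Rightarrow> ('n, 'k) vec) \<Rightarrow> (('n, 'k) vec \<Rightarrow> ('n, 'k) vec \<Rightarrow> ('n, 'k) vec) \<Rightarrow> bool" where
  "tcpd d c \<longleftrightarrow> comm_assoc d \<and> pre_lie c \<and>
     (\<forall>x y z. vsc 2 (c x (d y z)) = vadd (c (d z x) y) (d z (c x y))) \<and>
     (\<forall>x y z. vsub (vsc 2 (d (c x y) z)) (vsc 2 (d (c y x) z)) = vsub (d x (c y z)) (d y (c x z))) \<and>
     (\<forall>x y z. vadd (vsub (vsub (vsc 3 (c y (d z x))) (vsc 3 (c x (d z y)))) (c (d z x) y)) (c (d z y) x) = vzero)"

end

theory Submission
  imports Defs
begin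

lemma vadd_app: "vadd x y i = x i + y i" by (simp add: vadd_def)
lemma vsub_app: "vsub x y i = x i - y i" by (simp add: vsub_def)
lemma vsc_app: "vsc c x i = c * x i" by (simp add: vsc_def)
lemma vzero_app: "vzero i = 0" by (simp add: vzero_def)
lemmas vapp = vadd_app vsub_app vsc_app vzero_app

lemma lin_add: "linear_map f \<Longrightarrow> f (vadd a b) = vadd (f a) (f b)"
  by (simp add: linear_map_def)
lemma lin_sc: "linear_map f \<Longrightarrow> f (vsc k a) = vsc k (f a)"
  by (simp add: linear_map_def)
lemma lin_sub: "linear_map f \<Longrightarrow> f (vsub a b) = vsub (f a) (f b)"
proof -
  assume l: "linear_map f"
  have e: "vsub a b = vadd a (vsc (-1) b)" by (simp add: fun_eq_iff vapp)
  have "f (vsub a b) = vadd (f a) (vsc (-1) (f b))" unfolding e using l by (simp only: lin_add lin_sc)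
  also have "\<dots> = vsub (f a) (f b)" by (simp add: fun_eq_iff vapp)
  finally show ?thesis .
qed

lemma lin_sum:
  fixes f :: "('n::finite, 'k::field) vec \<Rightarrow> ('m, 'k) vec"
  assumes l: "linear_map f"
  shows "f u = (\<lambda>j. \<Sum>i\<in>UNIV. u i * f (unitv i) j)"
proof -
  have "finite S \<Longrightarrow> f (\<lambda>j. if j\<in>S then u j else 0) = (\<lambda>j. \<Sum>i\<in>S. u i * f (unitv i) j)" for S
  proof (induction S rule: finite_induct)
    case empty
    have "f (vsc 0 (\<lambda>j. 0)) = vsc 0 (f (\<lambda>j. 0))" using lin_sc[OF l] by blast
    moreover have "vsc 0 (\<lambda>j::'n. 0::'k) = (\<lambda>j. 0)" by (simp add: vsc_def)
    ultimately show ?case by (simp add: vsc_def)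
  next
    case (insert a S)
    have e: "(\<lambda>j. if j \<in> insert a S then u j else 0) = vadd (vsc (u a) (unitv a)) (\<lambda>j. if j\<in>S then u j else 0)"
      using insert(2) by (auto simp: fun_eq_iff unitv_def vapp)
    have "f (\<lambda>j. if j \<in> insert a S then u j else 0) = vadd (vsc (u a) (f (unitv a))) (f (\<lambda>j. if j\<in>S then u j else 0))"
      unfolding e using l by (simp only: lin_add lin_sc)
    then show ?case using insert by (simp add: fun_eq_iff vapp)
  qed
  from this[of UNIV] show ?thesis by simp
qed

lemma pair_vadd1[simp]: "pair (vadd a b) w = pair a w + pair b w"
  by (simp add: pair_def algebra_simps sum.distrib vapp)
lemma pair_vadd2[simp]: "pair w (vadd a b) = pair w a + pair w b"
  by (simp add: pair_def algebra_simps sum.distrib vapp)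
lemma pair_vsub1[simp]: "pair (vsub a b) w = pair a w - pair b w"
  by (simp add: pair_def algebra_simps sum_subtractf vapp)
lemma pair_vsub2[simp]: "pair w (vsub a b) = pair w a - pair w b"
  by (simp add: pair_def algebra_simps sum_subtractf vapp)
lemma pair_vsc1[simp]: "pair (vsc k a) w = k * pair a w"
  by (simp add: pair_def algebra_simps sum_distrib_left vapp)
lemma pair_vsc2[simp]: "pair w (vsc k a) = k * pair w a"
  by (simp add: pair_def algebra_simps sum_distrib_left vapp)
lemma pair_unitv2: "pair a (unitv i) = a i"
proof -
  have "pair a (unitv i) = (\<Sum>j\<in>UNIV. if j = i then a j else 0)"
    unfolding pair_def unitv_def by (rule sum.cong) auto
  then show ?thesis by simp
qed
lemma pair_unitv1: "pair (unitv i) a = a i"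
proof -
  have "pair (unitv i) a = (\<Sum>j\<in>UNIV. if j = i then a j else 0)"
    unfolding pair_def unitv_def by (rule sum.cong) auto
  then show ?thesis by simp
qed

lemma vec_eq_pair1: "(a = b) \<longleftrightarrow> (\<forall>w. pair a w = pair b w)"
  by (metis pair_unitv2 ext)
lemma vec_eq_pair2: "(a = b) \<longleftrightarrow> (\<forall>v. pair v a = pair v b)"
  by (metis pair_unitv1 ext)

lemma T1:
  assumes l: "linear_map (c x)"
  shows "pair (dual_rep c x v) w = - pair v (c x w)"
proof -
  have "pair v (c x w) = (\<Sum>j\<in>UNIV. v j * (\<Sum>i\<in>UNIV. w i * c x (unitv i) j))"
    by (subst lin_sum[OF l]) (simp add: pair_def)
  also have "\<dots> = (\<Sum>i\<in>UNIV. \<Sum>j\<in>UNIV. v j * c x (unitv i) j * w i)"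
    by (simp add: sum_distrib_left mult_ac) (rule sum.swap)
  finally show ?thesis
    by (simp add: dual_rep_def pair_def sum_distrib_right sum_negf)
qed

lemma T2:
  assumes l: "linear_map (d x)"
  shows "pair (neg_op (dual_rep d) x v) w = pair v (d x w)"
proof -
  have "pair v (d x w) = (\<Sum>j\<in>UNIV. v j * (\<Sum>i\<in>UNIV. w i * d x (unitv i) j))"
    by (subst lin_sum[OF l]) (simp add: pair_def)
  also have "\<dots> = (\<Sum>i\<in>UNIV. \<Sum>j\<in>UNIV. v j * d x (unitv i) j * w i)"
    by (simp add: sum_distrib_left mult_ac) (rule sum.swap)
  finally show ?thesis
    by (simp add: neg_op_def dual_rep_def pair_def sum_distrib_right sum_negf)
qed

lemma bl_r: "bilinear_op m \<Longrightarrow> linear_map (m x)" by (simp add: bilinear_op_def)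
lemma bl_l: "bilinear_op m \<Longrightarrow> linear_map (\<lambda>x. m x y)" by (simp add: bilinear_op_def)

lemma bilin_rules:
  assumes a: "bilinear_op m"
  shows "m x (vadd a b) = vadd (m x a) (m x b)" "m x (vsub a b) = vsub (m x a) (m x b)"
    "m x (vsc k a) = vsc k (m x a)" "m (vadd a b) y = vadd (m a y) (m b y)"
    "m (vsub a b) y = vsub (m a y) (m b y)" "m (vsc k a) y = vsc k (m a y)"
  using lin_add[OF bl_r[OF a]] lin_sub[OF bl_r[OF a]] lin_sc[OF bl_r[OF a]]
    lin_add[OF bl_l[OF a]] lin_sub[OF bl_l[OF a]] lin_sc[OF bl_l[OF a]] by auto

lemma T1b: "bilinear_op c \<Longrightarrow> pair (dual_rep c x v) w = - pair v (c x w)"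
  by (rule T1, erule bl_r)
lemma T2b: "bilinear_op d \<Longrightarrow> pair (neg_op (dual_rep d) x v) w = pair v (d x w)"
  by (rule T2, erule bl_r)

lemma iff_by_pair:
  fixes k :: "'k::field"
  assumes k: "k \<noteq> 0"
    and h: "\<And>x y v w. pair (L x y v) w - pair (R x y v) w = k * (pair v (P x y w) - pair v (Q x y w))"
  shows "(\<forall>x y v. L x y v = (R x y v :: ('n::finite,'k) vec)) \<longleftrightarrow> (\<forall>x y w. P x y w = (Q x y w :: ('n,'k) vec))"
proof -
  have "(\<forall>x y v. L x y v = R x y v) \<longleftrightarrow> (\<forall>x y v w. pair (L x y v) w = pair (R x y v) w)"
    by (auto simp: vec_eq_pair1[of "L _ _ _"])
  also have "\<dots> \<longleftrightarrow> (\<forall>x y v w. pair v (P x y w) = pair v (Q x y w))"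
  proof -
    have "pair (L x y v) w = pair (R x y v) w \<longleftrightarrow> pair v (P x y w) = pair v (Q x y w)" for x y v w
      using h[of x y v w] k by (metis eq_iff_diff_eq_0 mult_eq_0_iff)
    then show ?thesis by blast
  qed
  also have "\<dots> \<longleftrightarrow> (\<forall>x y w. P x y w = Q x y w)"
    by (auto simp: vec_eq_pair2[of "P _ _ _"])
  finally show ?thesis .
qed

context
  fixes d c :: "('n::finite, 'k::field_char_0) vec \<Rightarrow> ('n, 'k) vec \<Rightarrow> ('n, 'k) vec"
  assumes bd: "bilinear_op d" and bc: "bilinear_op c"
begin

lemma rep_a: "(\<forall>x y v. neg_op (dual_rep d) (d x y) v = neg_op (dual_rep d) x (neg_op (dual_rep d) y v))
   \<longleftrightarrow> (\<forall>x y w. d (d x y) w = d y (d x w))"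
  by (rule iff_by_pair[where k=1]) (simp_all add: T2b[OF bd])

lemma rep_b: "(\<forall>x y v. dual_rep c (commutator c x y) v = vsub (dual_rep c x (dual_rep c y v)) (dual_rep c y (dual_rep c x v)))
   \<longleftrightarrow> (\<forall>x y w. c (commutator c x y) w = vsub (c x (c y w)) (c y (c x w)))"
  by (rule iff_by_pair[where k="-1"]) (simp_all add: T1b[OF bc] algebra_simps)

lemma rep_c: "(\<forall>x y v. vsc 2 (neg_op (dual_rep d) x (dual_rep c y v)) = vadd (dual_rep c (d x y) v) (dual_rep c y (neg_op (dual_rep d) x v)))
   \<longleftrightarrow> (\<forall>x y w. vsc 2 (c y (d x w)) = vadd (c (d x y) w) (d x (c y w)))"
  by (rule iff_by_pair[where k="-1"]) (simp_all add: T1b[OF bc] T2b[OF bd] algebra_simps)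

lemma rep_d: "(\<forall>x y v. vsc 2 (neg_op (dual_rep d) (commutator c x y) v) = vsub (dual_rep c x (neg_op (dual_rep d) y v)) (dual_rep c y (neg_op (dual_rep d) x v)))
   \<longleftrightarrow> (\<forall>x y w. vsc 2 (d (commutator c x y) w) = vsub (d x (c y w)) (d y (c x w)))"
  by (rule iff_by_pair[where k="1"]) (simp_all add: T1b[OF bc] T2b[OF bd] algebra_simps)

lemma rep_lin:
  "(\<forall>x. linear_map (neg_op (dual_rep d) x)) \<and> (\<forall>x. linear_map (dual_rep c x)) \<and>
     (\<forall>x y. neg_op (dual_rep d) (vadd x y) = (\<lambda>v. vadd (neg_op (dual_rep d) x v) (neg_op (dual_rep d) y v))) \<and>
     (\<forall>k x. neg_op (dual_rep d) (vsc k x) = (\<lambda>v. vsc k (neg_op (dual_rep d) x v))) \<and>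
     (\<forall>x y. dual_rep c (vadd x y) = (\<lambda>v. vadd (dual_rep c x v) (dual_rep c y v))) \<and>
     (\<forall>k x. dual_rep c (vsc k x) = (\<lambda>v. vsc k (dual_rep c x v)))"
  by (simp add: linear_map_def neg_op_def dual_rep_def fun_eq_iff vapp bilin_rules[OF bd] bilin_rules[OF bc] algebra_simps)

lemma tp_rep_iff:
  "tp_rep d (commutator c) (neg_op (dual_rep d)) (dual_rep c) \<longleftrightarrow>
    (\<forall>x y w. d (d x y) w = d y (d x w)) \<and>
    (\<forall>x y w. c (commutator c x y) w = vsub (c x (c y w)) (c y (c x w))) \<and>
    (\<forall>x y w. vsc 2 (c y (d x w)) = vadd (c (d x y) w) (d x (c y w))) \<and>
    (\<forall>x y w. vsc 2 (d (commutator c x y) w) = vsub (d x (c y w)) (d y (c x w)))"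
  unfolding tp_rep_def rep_a rep_b rep_c rep_d by (simp only: rep_lin simp_thms)

lemma lie: "pre_lie c \<Longrightarrow> lie_alg (commutator c)"
  unfolding lie_alg_def
proof (intro conjI allI)
  fix x show "commutator c x x = vzero" by (simp add: commutator_def fun_eq_iff vapp)
next
  fix x y z
  assume PL: "pre_lie c"
  show "vadd (vadd (commutator c x (commutator c y z)) (commutator c y (commutator c z x))) (commutator c z (commutator c x y)) = vzero"
  proof (rule ext)
    fix j
    have h1: "c (c x y) z j - c x (c y z) j = c (c y x) z j - c y (c x z) j"
      using fun_cong[OF PL[unfolded pre_lie_def, rule_format, where x=x and y=y and z=z], of j] by (simp add: vapp)
    have h2: "c (c y z) x j - c y (c z x) j = c (c z y) x j - c z (c y x) j"
      using fun_cong[OF PL[unfolded pre_lie_def, rule_format, where x=y and y=z and z=x], of j] by (simp add: vapp)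
    have h3: "c (c z x) y j - c z (c x y) j = c (c x z) y j - c x (c z y) j"
      using fun_cong[OF PL[unfolded pre_lie_def, rule_format, where x=z and y=x and z=y], of j] by (simp add: vapp)
    show "vadd (vadd (commutator c x (commutator c y z)) (commutator c y (commutator c z x))) (commutator c z (commutator c x y)) j = vzero j"
      using h1 h2 h3 apply (simp add: commutator_def bilin_rules[OF bc] vapp algebra_simps)
      by algebra
  qed
qed

lemma dir2_compat:
  assumes CA: "comm_assoc d"
    and T1: "\<forall>x y z. vsc 2 (c x (d y z)) = vadd (c (d z x) y) (d z (c x y))"
    and T2: "\<forall>x y z. vsub (vsc 2 (d (c x y) z)) (vsc 2 (d (c y x) z)) = vsub (d x (c y z)) (d y (c x z))"
    and T3: "\<forall>x y z. vadd (vsub (vsub (vsc 3 (c y (d z x))) (vsc 3 (c x (d z y)))) (c (d z x) y)) (c (d z y) x) = vzero"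
  shows "vsc 2 (d z (commutator c x y)) = vadd (commutator c (d z x) y) (commutator c x (d z y))"
proof (rule ext)
  fix j
  have cm: "\<And>a b. d a b = d b a" using CA by (simp add: comm_assoc_def)
  have c1: "d (c x y) z = d z (c x y)" "d (c y x) z = d z (c y x)" "d y x = d x y" using cm by blast+
  have hT2: "2 * d z (c x y) j - 2 * d z (c y x) j = d x (c y z) j - d y (c x z) j"
    using fun_cong[OF T2[rule_format, where x=x and y=y and z=z], of j] by (simp add: vapp c1)
  have hA: "2 * c y (d z x) j = c (d x y) z j + d x (c y z) j"
    using fun_cong[OF T1[rule_format, where x=y and y=z and z=x], of j] by (simp add: vapp)
  have hB: "2 * c x (d z y) j = c (d x y) z j + d y (c x z) j"
    using fun_cong[OF T1[rule_format, where x=x and y=z and z=y], of j] by (simp add: vapp c1)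
  have hT3: "3 * c y (d z x) j - 3 * c x (d z y) j - c (d z x) y j + c (d z y) x j = 0"
    using fun_cong[OF T3[rule_format, where x=x and y=y and z=z], of j] by (simp add: vapp)
  show "vsc 2 (d z (commutator c x y)) j = vadd (commutator c (d z x) y) (commutator c x (d z y)) j"
    using hT2 hA hB hT3 apply (simp add: commutator_def bilin_rules[OF bc] bilin_rules[OF bd] vapp algebra_simps)
    by algebra
qed

lemma dir2_rep:
  assumes CA: "comm_assoc d" and PL: "pre_lie c"
    and T1: "\<forall>x y z. vsc 2 (c x (d y z)) = vadd (c (d z x) y) (d z (c x y))"
    and T2: "\<forall>x y z. vsub (vsc 2 (d (c x y) z)) (vsc 2 (d (c y x) z)) = vsub (d x (c y z)) (d y (c x z))"
  shows "(\<forall>x y w. d (d x y) w = d y (d x w)) \<and>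
    (\<forall>x y w. c (commutator c x y) w = vsub (c x (c y w)) (c y (c x w))) \<and>
    (\<forall>x y w. vsc 2 (c y (d x w)) = vadd (c (d x y) w) (d x (c y w))) \<and>
    (\<forall>x y w. vsc 2 (d (commutator c x y) w) = vsub (d x (c y w)) (d y (c x w)))"
proof (intro conjI allI)
  have cm: "\<And>a b. d a b = d b a" and as: "\<And>a b e. d (d a b) e = d a (d b e)"
    using CA unfolding comm_assoc_def by blast+
  fix x y w
  show "d (d x y) w = d y (d x w)" by (metis cm as)
  show "c (commutator c x y) w = vsub (c x (c y w)) (c y (c x w))"
  proof (rule ext)
    fix j
    have h: "c (c x y) w j - c x (c y w) j = c (c y x) w j - c y (c x w) j"
      using fun_cong[OF PL[unfolded pre_lie_def, rule_format, where x=x and y=y and z=w], of j] by (simp add: vapp)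
    show "c (commutator c x y) w j = vsub (c x (c y w)) (c y (c x w)) j"
      using h by (simp add: commutator_def bilin_rules[OF bc] vapp algebra_simps)
  qed
  show "vsc 2 (c y (d x w)) = vadd (c (d x y) w) (d x (c y w))"
    using T1[rule_format, where x=y and y=w and z=x] cm[of w x] by simp
  show "vsc 2 (d (commutator c x y) w) = vsub (d x (c y w)) (d y (c x w))"
  proof (rule ext)
    fix j
    have h: "2 * d (c x y) w j - 2 * d (c y x) w j = d x (c y w) j - d y (c x w) j"
      using fun_cong[OF T2[rule_format, where x=x and y=y and z=w], of j] by (simp add: vapp)
    show "vsc 2 (d (commutator c x y) w) j = vsub (d x (c y w)) (d y (c x w)) j"
      using h by (simp add: commutator_def bilin_rules[OF bd] vapp algebra_simps)
  qed
qed

lemma dir1: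
  assumes CA: "comm_assoc d"
    and TP: "\<forall>x y z. vsc 2 (d z (commutator c x y)) = vadd (commutator c (d z x) y) (commutator c x (d z y))"
    and C': "\<forall>x y w. vsc 2 (c y (d x w)) = vadd (c (d x y) w) (d x (c y w))"
    and D': "\<forall>x y w. vsc 2 (d (commutator c x y) w) = vsub (d x (c y w)) (d y (c x w))"
  shows "(\<forall>x y z. vsc 2 (c x (d y z)) = vadd (c (d z x) y) (d z (c x y))) \<and>
     (\<forall>x y z. vsub (vsc 2 (d (c x y) z)) (vsc 2 (d (c y x) z)) = vsub (d x (c y z)) (d y (c x z))) \<and>
     (\<forall>x y z. vadd (vsub (vsub (vsc 3 (c y (d z x))) (vsc 3 (c x (d z y)))) (c (d z x) y)) (c (d z y) x) = vzero)"
proof (intro conjI allI)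
  have cm: "\<And>a b. d a b = d b a" using CA by (simp add: comm_assoc_def)
  fix x y z
  show "vsc 2 (c x (d y z)) = vadd (c (d z x) y) (d z (c x y))"
    using C'[rule_format, where x=z and y=x and w=y] cm[of z y] by simp
  show "vsub (vsc 2 (d (c x y) z)) (vsc 2 (d (c y x) z)) = vsub (d x (c y z)) (d y (c x z))"
  proof (rule ext)
    fix j
    have h: "2 * (d (c x y) z j - d (c y x) z j) = d x (c y z) j - d y (c x z) j"
      using fun_cong[OF D'[rule_format, where x=x and y=y and w=z], of j] by (simp add: vapp commutator_def bilin_rules[OF bd])
    show "vsub (vsc 2 (d (c x y) z)) (vsc 2 (d (c y x) z)) j = vsub (d x (c y z)) (d y (c x z)) j"
      using h by (simp add: vapp algebra_simps)
  qed
  show "vadd (vsub (vsub (vsc 3 (c y (d z x))) (vsc 3 (c x (d z y)))) (c (d z x) y)) (c (d z y) x) = vzero"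
  proof (rule ext)
    fix j
    have c1: "d (c x y) z = d z (c x y)" "d (c y x) z = d z (c y x)" "d y x = d x y" "d x z = d z x" "d y z = d z y"
      using cm by blast+
    have hTP: "2 * (d z (c x y) j - d z (c y x) j) = c (d z x) y j - c y (d z x) j + (c x (d z y) j - c (d z y) x j)"
      using fun_cong[OF TP[rule_format, where x=x and y=y and z=z], of j]
      by (simp add: vapp commutator_def bilin_rules[OF bd] bilin_rules[OF bc])
    have hD: "2 * (d z (c x y) j - d z (c y x) j) = d x (c y z) j - d y (c x z) j"
      using fun_cong[OF D'[rule_format, where x=x and y=y and w=z], of j]
      by (simp add: vapp commutator_def bilin_rules[OF bd] c1)
    have hA: "2 * c y (d z x) j = c (d x y) z j + d x (c y z) j"
      using fun_cong[OF C'[rule_format, where x=x and y=y and w=z], of j] by (simp add: vapp c1)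
    have hB: "2 * c x (d z y) j = c (d x y) z j + d y (c x z) j"
      using fun_cong[OF C'[rule_format, where x=y and y=x and w=z], of j] by (simp add: vapp c1)
    have "2 * (3 * c y (d z x) j - 3 * c x (d z y) j - c (d z x) y j + c (d z y) x j) = 0"
      using hTP hD hA hB by algebra
    then have "3 * c y (d z x) j - 3 * c x (d z y) j - c (d z x) y j + c (d z y) x j = 0"
      by (metis mult_eq_0_iff zero_neq_numeral)
    then show "vadd (vsub (vsub (vsc 3 (c y (d z x))) (vsc 3 (c x (d z y)))) (c (d z x) y)) (c (d z y) x) j = vzero j"
      by (simp add: vapp)
  qed
qed

end

theorem mainTheorem17:
  fixes dot circ :: "('n::finite, 'k::field_char_0) vec \<Rightarrow> ('n, 'k) vec \<Rightarrow> ('n, 'k) vec"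
  assumes "bilinear_op dot" and "bilinear_op circ"
  shows "(transposed_poisson dot (commutator circ) \<and> pre_lie circ \<and>
            tp_rep dot (commutator circ) (neg_op (dual_rep dot)) (dual_rep circ)
          \<longrightarrow> tcpd dot circ)
       \<and> (tcpd dot circ \<longrightarrow>
            transposed_poisson dot (commutator circ) \<and>
            tp_rep dot (commutator circ) (neg_op (dual_rep dot)) (dual_rep circ))"
proof (intro conjI impI)
  assume H: "transposed_poisson dot (commutator circ) \<and> pre_lie circ \<and>
            tp_rep dot (commutator circ) (neg_op (dual_rep dot)) (dual_rep circ)"
  then have CA: "comm_assoc dot" and TP: "\<forall>x y z. vsc 2 (dot z (commutator circ x y)) = vadd (commutator circ (dot z x) y) (commutator circ x (dot z y))"
    and PL: "pre_lie circ"
    by (simp_all add: transposed_poisson_def)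
  from H have R: "tp_rep dot (commutator circ) (neg_op (dual_rep dot)) (dual_rep circ)" by simp
  note R' = R[unfolded tp_rep_iff[OF assms]]
  have C': "\<forall>x y w. vsc 2 (circ y (dot x w)) = vadd (circ (dot x y) w) (dot x (circ y w))"
    and D': "\<forall>x y w. vsc 2 (dot (commutator circ x y) w) = vsub (dot x (circ y w)) (dot y (circ x w))"
    using R' by blast+
  show "tcpd dot circ" unfolding tcpd_def
    using CA PL dir1[OF assms CA TP C' D'] by blast
next
  assume H: "tcpd dot circ"
  then have CA: "comm_assoc dot" and PL: "pre_lie circ"
    and T1: "\<forall>x y z. vsc 2 (circ x (dot y z)) = vadd (circ (dot z x) y) (dot z (circ x y))"
    and T2: "\<forall>x y z. vsub (vsc 2 (dot (circ x y) z)) (vsc 2 (dot (circ y x) z)) = vsub (dot x (circ y z)) (dot y (circ x z))"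
    and T3: "\<forall>x y z. vadd (vsub (vsub (vsc 3 (circ y (dot z x))) (vsc 3 (circ x (dot z y)))) (circ (dot z x) y)) (circ (dot z y) x) = vzero"
    by (simp_all add: tcpd_def)
  show "transposed_poisson dot (commutator circ)"
    unfolding transposed_poisson_def
    using CA lie[OF assms PL] dir2_compat[OF assms CA T1 T2 T3] by blast
  show "tp_rep dot (commutator circ) (neg_op (dual_rep dot)) (dual_rep circ)"
    unfolding tp_rep_iff[OF assms] using dir2_rep[OF assms CA PL T1 T2] .
qed

end
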